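(* Let $X$ be a complete metric space, let $f:X\to\mathbb{R}\cup\{+\infty\}$ be a lower semicontinuous function, let $r_0>0$, $k>0$, and let $\varphi\in\mathcal{K}(0,r_0)$. The following assertions are equivalent: (i) the multivalued mapping $X\rightrightarrows\mathbb{R}$, $x\mapsto[(\varphi\circ f)(x),+\infty)$, is $k$-metrically regular on $[0<f<r_0]\times(0,\varphi(r_0))$; (ii) for all $r_1,r_2\in(0,r_0)$, $\operatorname{Dist}([f\le r_1],[f\le r_2])\le k\,|\varphi(r_1)-\varphi(r_2)|$; (iii) for all $x\in[0<f<r_0]$, $|\nabla(\varphi\circ f)|(x)\ge\frac1k$.
   Context: $\mathcal{K}(0,r_0)$ is the set of functions $\varphi\in C([0,r_0))\cap C^1(0,r_0)$ with $\varphi(0)=0$ and $\varphi'(r)>0$ for all $r\in(0,r_0)$; $\varphi(r_0)$ denotes $\lim_{r\uparrow r_0}\varphi(r)\in(0,+\infty]$. Notation: $[r_1<f<r_2]=\{x:r_1<f(x)<r_2\}$, $[f\le r]=\{x:f(x)\le r\}$. $\operatorname{dist}(x,S)=\inf_{y\in S}d(x,y)$; the Hausdorff distance is $\operatorname{Dist}(S_1,S_2)=\max\{\sup_{x\in S_1}\operatorname{dist}(x,S_2),\sup_{x\in S_2}\operatorname{dist}(x,S_1)\}$ (possibly $+\infty$). A multivalued map $F:X\rightrightarrows Y$ is $k$-metrically regular at $(\bar x,\bar y)\in\operatorname{Graph}F$ if there exist $\varepsilon,\delta>0$ with $\operatorname{dist}(x,F^{-1}(y))\le k\operatorname{dist}(y,F(x))$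 for all $(x,y)\in B(\bar x,\varepsilon)\times B(\bar y,\delta)$, where $F^{-1}(y)=\{x:y\in F(x)\}$; it is $k$-metrically regular on $V$ if it is so at every point of $\operatorname{Graph}F\cap V$. Strong slope: $|\nabla g|(x)=\limsup_{y\to x}\frac{(g(x)-g(y))^+}{d(x,y)}$, $a^+=\max\{a,0\}$. *)

theory Defs
  imports "HOL-Analysis.Analysis"
begin

definition lsc :: "('a::topological_space \<Rightarrow> ereal) \<Rightarrow> bool" where
  "lsc f \<longleftrightarrow> (\<forall>x. \<forall>c. c < f x \<longrightarrow> eventually (\<lambda>y. c < f y) (nhds x))"

definition classK :: "real \<Rightarrow> (real \<Rightarrow> real) \<Rightarrow> bool" where
  "classK r0 \<phi> \<longleftrightarrow> continuous_on {0..<r0} \<phi> \<and> \<phi> 0 = 0 \<and>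
     (\<exists>\<phi>'. (\<forall>r\<in>{0<..<r0}. (\<phi> has_real_derivative \<phi>' r) (at r) \<and> \<phi>' r > 0)
           \<and> continuous_on {0<..<r0} \<phi>')"

text \<open>phi(r0) = limit of phi(r) as r tends to r0 from the left, in (0, +infinity].\<close>
definition phi_lim :: "real \<Rightarrow> (real \<Rightarrow> real) \<Rightarrow> ereal" where
  "phi_lim r0 \<phi> = Lim (at_left r0) (\<lambda>r. ereal (\<phi> r))"

definition phi_comp :: "real \<Rightarrow> (real \<Rightarrow> real) \<Rightarrow> ('a \<Rightarrow> ereal) \<Rightarrow> 'a \<Rightarrow> ereal" where
  "phi_comp r0 \<phi> f x =
     (if f x \<le> 0 then ereal (\<phi> 0)
      else if f x < ereal r0 then ereal (\<phi> (real_of_ereal (f x)))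
      else phi_lim r0 \<phi>)"

text \<open>Distance from a point to a set, with dist(x, empty) = +infinity.\<close>
definition edist :: "'a::metric_space \<Rightarrow> 'a set \<Rightarrow> ereal" where
  "edist x S = (INF y\<in>S. ereal (dist x y))"

definition hDist :: "'a::metric_space set \<Rightarrow> 'a set \<Rightarrow> ereal" where
  "hDist S1 S2 = max (SUP x\<in>S1. edist x S2) (SUP x\<in>S2. edist x S1)"

definition graph :: "('a \<Rightarrow> 'b set) \<Rightarrow> ('a \<times> 'b) set" where
  "graph F = {(x, y). y \<in> F x}"

definition inv_map :: "('a \<Rightarrow> 'b set) \<Rightarrow> 'b \<Rightarrow> 'a set" where
  "inv_map F y = {x. y \<in> F x}"

definition metric_regular_at ::
  "real \<Rightarrow> ('a::metric_space \<Rightarrow> 'b::metric_space set) \<Rightarrow> 'a \<Rightarrow> 'b \<Rightarrow> bool" where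
  "metric_regular_at k F xb yb \<longleftrightarrow> (xb, yb) \<in> graph F \<and>
     (\<exists>\<epsilon>>0. \<exists>\<delta>>0. \<forall>x\<in>ball xb \<epsilon>. \<forall>y\<in>ball yb \<delta>.
        edist x (inv_map F y) \<le> ereal k * edist y (F x))"

definition metric_regular_on ::
  "real \<Rightarrow> ('a::metric_space \<Rightarrow> 'b::metric_space set) \<Rightarrow> ('a \<times> 'b) set \<Rightarrow> bool" where
  "metric_regular_on k F V \<longleftrightarrow> (\<forall>(xb, yb)\<in>graph F \<inter> V. metric_regular_at k F xb yb)"

definition strong_slope :: "('a::metric_space \<Rightarrow> ereal) \<Rightarrow> 'a \<Rightarrow> ereal" where
  "strong_slope g x = Limsup (at x) (\<lambda>y. max 0 (g x - g y) / ereal (dist x y))"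

end

theory Submission
  imports Defs
begin

lemma edist_le_dist: "y \<in> S \<Longrightarrow> edist x S \<le> ereal (dist x y)"
  unfolding edist_def by (rule INF_lower)

lemma edist_nonneg: "0 \<le> edist x S"
  unfolding edist_def by (rule INF_greatest) simp

lemma edist_self: "x \<in> S \<Longrightarrow> edist x S = 0"
  using edist_le_dist[of x S x] edist_nonneg[of x S] by (simp add: zero_ereal_def[symmetric] antisym)

lemma edist_lessE: "edist x S < ereal r \<Longrightarrow> \<exists>y\<in>S. dist x y < r"
  unfolding edist_def by (auto simp: INF_less_iff)

lemma edist_triangle: "edist x S \<le> ereal (dist x z) + edist z S"
proof (cases "S = {}")
  case True then show ?thesis by (simp add: edist_def top_ereal_def)
next
  case False
  have "edist x S \<le> (INF y\<in>S. ereal (dist z y) + ereal (dist x z))"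
    unfolding edist_def
  proof (rule INF_mono)
    fix y assume "y \<in> S"
    then show "\<exists>m\<in>S. ereal (dist x m) \<le> ereal (dist z y) + ereal (dist x z)"
      using dist_triangle[of x y z] by (intro bexI[of _ y]) (auto simp: dist_commute)
  qed
  also have "\<dots> = edist z S + ereal (dist x z)"
    unfolding edist_def by (rule INF_ereal_add_left) (use False in auto)
  finally show ?thesis by (simp add: add.commute)
qed

definition rlsc :: "('a::topological_space \<Rightarrow> real) \<Rightarrow> bool" where
  "rlsc h \<longleftrightarrow> (\<forall>x c. c < h x \<longrightarrow> eventually (\<lambda>y. c < h y) (nhds x))"

lemma rlsc_seq:
  assumes "rlsc h" "X \<longlonglongrightarrow> z" "c < h z"
  shows "eventually (\<lambda>n. c < h (X n)) sequentially"
  using assms unfolding rlsc_def filterlim_iff by blast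

lemma ekeland:
  fixes h :: "'a::complete_space \<Rightarrow> real"
  assumes lsc: "rlsc h" and bdd: "\<And>x. m \<le> h x" and al: "\<alpha> > 0"
  shows "\<exists>z. h z + \<alpha> * dist z x0 \<le> h x0 \<and> (\<forall>y. y \<noteq> z \<longrightarrow> h z < h y + \<alpha> * dist y z)"
proof -
  define S where "S x = {y. h y + \<alpha> * dist y x \<le> h x}" for x
  have S_refl: "x \<in> S x" for x by (simp add: S_def)
  have S_trans: "S y \<subseteq> S x" if "y \<in> S x" for x y
  proof
    fix w assume "w \<in> S y"
    have "dist w x \<le> dist w y + dist y x" by (rule dist_triangle)
    then have "\<alpha> * dist w x \<le> \<alpha> * dist w y + \<alpha> * dist y x"
      using al by (metis distrib_left mult_left_mono less_imp_le)
    with \<open>w \<in> S y\<close> that show "w \<in> S x" by (auto simp: S_def)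
  qed
  have bddS: "bdd_below (h ` S x)" for x using bdd by (intro bdd_belowI[of _ m]) auto
  have ex: "\<exists>y. y \<in> S x \<and> h y \<le> Inf (h ` S x) + e" if "e > 0" for x e
  proof -
    have "Inf (h ` S x) < Inf (h ` S x) + e" using that by simp
    then obtain t where "t \<in> h ` S x" "t < Inf (h ` S x) + e"
      using cInf_lessD[of "h ` S x"] S_refl by blast
    then show ?thesis by force
  qed
  define nxt where "nxt x n = (SOME y. y \<in> S x \<and> h y \<le> Inf (h ` S x) + (1/2)^n)" for x n
  have nxt: "nxt x n \<in> S x \<and> h (nxt x n) \<le> Inf (h ` S x) + (1/2)^n" for x n
    unfolding nxt_def by (rule someI_ex) (rule ex, simp)
  define X where "X = rec_nat x0 (\<lambda>n x. nxt x n)"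
  have X0: "X 0 = x0" and XS: "X (Suc n) = nxt (X n) n" for n by (simp_all add: X_def)
  have mono: "S (X m) \<subseteq> S (X n)" if "n \<le> m" for m n
    using that
  proof (induction m rule: dec_induct)
    case base then show ?case by simp
  next
    case (step m)
    have "X (Suc m) \<in> S (X m)" using nxt XS by simp
    then show ?case using S_trans step.IH by blast
  qed
  have diam: "\<alpha> * dist y (X (Suc n)) \<le> (1/2)^n" if "y \<in> S (X (Suc n))" for y n
  proof -
    have "X (Suc n) \<in> S (X n)" using nxt XS by simp
    then have "y \<in> S (X n)" using S_trans that by blast
    then have "Inf (h ` S (X n)) \<le> h y" by (intro cInf_lower bddS) auto
    moreover have "h (X (Suc n)) \<le> Inf (h ` S (X n)) + (1/2)^n" using nxt XS by simp
    moreover have "h y + \<alpha> * dist y (X (Suc n)) \<le> h (X (Suc n))" using that by (simp add: S_def)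
    ultimately show ?thesis by linarith
  qed
  have inS: "X m \<in> S (X n)" if "n \<le> m" for m n using mono[OF that] S_refl by blast
  have dbound: "dist y (X (Suc n)) \<le> (1/2)^n / \<alpha>" if "y \<in> S (X (Suc n))" for y n
    using diam[OF that] al by (simp add: field_simps)
  have small: "\<exists>N. (1/2::real)^N / \<alpha> < e" if epos: "e > 0" for e
  proof -
    obtain N where "(1/2::real)^N < e * \<alpha>" using real_arch_pow_inv[of "e*\<alpha>" "1/2"] epos al by (auto simp: mult_pos_pos)
    then show ?thesis using al by (auto simp: field_simps)
  qed
  have "Cauchy X"
  proof (rule metric_CauchyI)
    fix e :: real assume "e > 0"
    then obtain N where N: "(1/2::real)^N / \<alpha> < e/2" using small[of "e/2"] by auto
    show "\<exists>M. \<forall>m\<ge>M. \<forall>n\<ge>M. dist (X m) (X n) < e"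
    proof (intro exI allI impI)
      fix m n assume "Suc N \<le> m" "Suc N \<le> n"
      then have "dist (X m) (X (Suc N)) \<le> (1/2)^N / \<alpha>" "dist (X n) (X (Suc N)) \<le> (1/2)^N / \<alpha>"
        using dbound inS by blast+
      then show "dist (X m) (X n) < e" using N dist_triangle3[of "X m" "X n" "X (Suc N)"] dist_commute[of "X (Suc N)" "X m"] dist_commute[of "X (Suc N)" "X n"] by linarith
    qed
  qed
  then obtain z where z: "X \<longlonglongrightarrow> z" using Cauchy_convergent convergent_def by blast
  have zS: "z \<in> S (X n)" for n
  proof (rule ccontr)
    assume "z \<notin> S (X n)"
    then have gt: "h z + \<alpha> * dist z (X n) > h (X n)" by (simp add: S_def)
    define \<eta> where "\<eta> = h z + \<alpha> * dist z (X n) - h (X n)"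
    have \<eta>: "\<eta> > 0" using gt by (simp add: \<eta>_def)
    have e1: "eventually (\<lambda>m. h z - \<eta>/2 < h (X m)) sequentially"
      by (rule rlsc_seq[OF lsc z]) (use \<eta> in simp)
    have "(\<lambda>m. dist (X m) (X n)) \<longlonglongrightarrow> dist z (X n)" by (intro tendsto_intros z)
    then have e2: "eventually (\<lambda>m. dist z (X n) - \<eta>/(2*\<alpha>) < dist (X m) (X n)) sequentially"
      by (rule order_tendstoD) (use \<eta> al in simp)
    have e3: "eventually (\<lambda>m. n \<le> m) sequentially" by (rule eventually_ge_at_top)
    obtain m where m: "h z - \<eta>/2 < h (X m)" "dist z (X n) - \<eta>/(2*\<alpha>) < dist (X m) (X n)" "n \<le> m"
      using eventually_happens'[OF sequentially_bot eventually_conj[OF e1 eventually_conj[OF e2 e3]]] by blast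
    have "\<alpha> * (dist z (X n) - \<eta>/(2*\<alpha>)) < \<alpha> * dist (X m) (X n)"
      using m(2) al by simp
    then have "\<alpha> * dist z (X n) - \<eta>/2 < \<alpha> * dist (X m) (X n)"
      using al by (simp add: right_diff_distrib)
    moreover have "h (X m) + \<alpha> * dist (X m) (X n) \<le> h (X n)" using inS[OF m(3)] by (simp add: S_def)
    ultimately show False using m(1) unfolding \<eta>_def by (simp add: field_simps)
  qed
  have uniq: "y = z" if "\<And>n. y \<in> S (X n)" for y
  proof (rule ccontr)
    assume "y \<noteq> z"
    then have "dist y z > 0" by simp
    then obtain N where N: "(1/2::real)^N / \<alpha> < dist y z / 2" using small[of "dist y z / 2"] by auto
    have "dist y (X (Suc N)) \<le> (1/2)^N / \<alpha>" "dist z (X (Suc N)) \<le> (1/2)^N / \<alpha>"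
      using dbound that zS by blast+
    then show False using N dist_triangle3[of y z "X (Suc N)"] dist_commute[of "X (Suc N)" y] dist_commute[of "X (Suc N)" z] by linarith
  qed
  show ?thesis
  proof (intro exI conjI allI impI)
    show "h z + \<alpha> * dist z x0 \<le> h x0" using zS[of 0] by (simp add: S_def X0)
    fix y assume "y \<noteq> z"
    show "h z < h y + \<alpha> * dist y z"
    proof (rule ccontr)
      assume "\<not> ?thesis"
      then have "y \<in> S z" by (simp add: S_def)
      then have "y \<in> S (X n)" for n using S_trans[OF zS[of n]] by blast
      then show False using uniq \<open>y \<noteq> z\<close> by blast
    qed
  qed
qed

lemma ratio_le:
  assumes "d > 0" "s \<le> \<alpha> * d" "\<alpha> \<ge> 0"
  shows "max 0 (ereal s) / ereal d \<le> ereal \<alpha>"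
proof -
  have e: "max 0 (ereal s) / ereal d = ereal (max 0 s / d)"
    using assms by (cases "s \<le> 0") (auto simp: max_def ereal_divide zero_ereal_def)
  have "max 0 s / d \<le> \<alpha>" using assms by (auto simp: field_simps max_def)
  then show ?thesis using e by simp
qed

lemma error_bound:
  fixes g :: "'a::complete_space \<Rightarrow> ereal"
  assumes lsc: "lsc g" and nn: "\<And>x. 0 \<le> g x" and k: "k > 0"
    and slope: "\<And>z. ereal a < g z \<Longrightarrow> g z < L \<Longrightarrow> ereal (1/k) \<le> strong_slope g z"
    and x0: "ereal a < g x0" "g x0 = ereal c" "g x0 < L"
  shows "edist x0 {x. g x \<le> ereal a} \<le> ereal (k * (c - a))"
proof (rule ccontr)
  assume "\<not> ?thesis"
  then have Dgt: "ereal (k * (c - a)) < edist x0 {x. g x \<le> ereal a}" by simp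
  obtain R where R: "ereal (k * (c - a)) < ereal R" "ereal R < edist x0 {x. g x \<le> ereal a}"
    using ereal_dense2[OF Dgt] by blast
  have ca: "a < c" using x0 by simp
  have kca: "k * (c - a) < R" using R(1) by simp
  have Rpos: "R > 0" using kca k ca by (smt (verit) mult_pos_pos)
  define \<alpha> where "\<alpha> = (c - a) / R"
  have \<alpha>pos: "\<alpha> > 0" using ca Rpos by (simp add: \<alpha>_def)
  have \<alpha>k: "\<alpha> < 1/k" using kca k Rpos by (simp add: \<alpha>_def field_simps)
  define h' where "h' x = min (max (g x) (ereal a)) (ereal (c+1))" for x
  define h where "h x = real_of_ereal (h' x)" for x
  have h'fin: "h' x = ereal (h x)" for x
  proof -
    have "ereal a \<le> h' x" "h' x \<le> ereal (c+1)" using ca by (auto simp: h'_def)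
    then show ?thesis unfolding h_def by (cases "h' x") auto
  qed
  have hge: "a \<le> h x" for x
  proof -
    have "ereal a \<le> h' x" using ca by (auto simp: h'_def)
    then show ?thesis using h'fin[of x] by simp
  qed
  have hx0: "h x0 = c" using h'fin[of x0] x0 ca by (simp add: h'_def)
  have "rlsc h"
    unfolding rlsc_def
  proof (intro allI impI)
    fix x c' assume "c' < h x"
    then have "ereal c' < h' x" using h'fin by simp
    then have "ereal c' < ereal (c+1)" and alt: "ereal c' < g x \<or> ereal c' < ereal a"
      by (auto simp: h'_def less_max_iff_disj)
    show "eventually (\<lambda>y. c' < h y) (nhds x)"
    proof (cases "ereal c' < ereal a")
      case True
      then have "c' < a" by simp
      then show ?thesis using hge by (intro always_eventually allI) (meson less_le_trans)
    next
      case False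
      then have "ereal c' < g x" using alt by simp
      then have "eventually (\<lambda>y. ereal c' < g y) (nhds x)" using lsc by (simp add: lsc_def)
      then show ?thesis
      proof (rule eventually_mono)
        fix y assume "ereal c' < g y"
        then have "ereal c' < h' y" using \<open>ereal c' < ereal (c+1)\<close> by (auto simp: h'_def less_max_iff_disj)
        then show "c' < h y" using h'fin by simp
      qed
    qed
  qed
  from ekeland[OF this hge \<alpha>pos, of x0]
  obtain z where z1: "h z + \<alpha> * dist z x0 \<le> h x0" and z2: "\<And>y. y \<noteq> z \<Longrightarrow> h z < h y + \<alpha> * dist y z"
    by blast
  have "\<alpha> * dist z x0 \<le> c - a" using z1 hx0 hge[of z] by simp
  then have "(c - a) * dist z x0 \<le> (c - a) * R" using \<alpha>pos Rpos ca by (simp add: \<alpha>_def field_simps)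
  then have dz: "dist z x0 \<le> R" using ca by (meson diff_gt_0_iff_gt mult_left_le_imp_le)
  have "z \<notin> {x. g x \<le> ereal a}"
  proof
    assume "z \<in> {x. g x \<le> ereal a}"
    then have "edist x0 {x. g x \<le> ereal a} \<le> ereal (dist x0 z)" by (rule edist_le_dist)
    with R(2) dz show False by (metis dist_commute ereal_less_eq(3) not_le order.trans)
  qed
  then have gza: "ereal a < g z" by simp
  have hzc: "h z \<le> c" using z1 hx0 \<alpha>pos by (smt (verit) mult_nonneg_nonneg zero_le_dist)
  have gz: "g z = ereal (h z)"
  proof -
    have "h' z \<le> ereal c" using h'fin hzc by simp
    then have "h' z = max (g z) (ereal a)" unfolding h'_def by (auto simp: min_def)
    then show ?thesis using gza h'fin[of z] by (simp add: max_def split: if_splits)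
  qed
  have gzL: "g z < L" using gz hzc x0 by (metis ereal_less_eq(3) order.strict_trans1)
  have lower: "ereal (1/k) \<le> strong_slope g z" by (rule slope[OF gza gzL])
  have "eventually (\<lambda>y. ereal a < g y) (nhds z)" using lsc gza by (simp add: lsc_def)
  then have ev: "eventually (\<lambda>y. ereal a < g y) (at z)"
    by (simp add: eventually_at_filter eventually_mono)
  have ev2: "eventually (\<lambda>y. y \<noteq> z) (at z)" by (simp add: eventually_at_filter)
  have "strong_slope g z \<le> ereal \<alpha>"
    unfolding strong_slope_def
  proof (rule Limsup_bounded, rule eventually_mono[OF eventually_conj[OF ev ev2]])
    fix y assume y: "ereal a < g y \<and> y \<noteq> z"
    then have dpos: "dist z y > 0" by auto
    show "max 0 (g z - g y) / ereal (dist z y) \<le> ereal \<alpha>"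
    proof (cases "g y < ereal (c+1)")
      case True
      then have "h' y = g y" using y by (auto simp: h'_def min_def max_def)
      then have gy: "g y = ereal (h y)" using h'fin by simp
      have "h z - h y \<le> \<alpha> * dist z y" using z2[of y] y by (simp add: dist_commute)
      then show ?thesis using gz gy ratio_le[OF dpos _ less_imp_le[OF \<alpha>pos]] by simp
    next
      case False
      then have "g z - g y \<le> 0" using gz hzc
        by (cases "g y") (auto simp: not_less)
      then have "max 0 (g z - g y) = 0" by (simp add: max_def)
      then show ?thesis using \<alpha>pos by (simp add: zero_ereal_def)
    qed
  qed
  with lower \<alpha>k show False by (smt (verit) ereal_less_eq(3) order.trans)
qed

lemma slope_lb:
  fixes g :: "'a::metric_space \<Rightarrow> ereal"
  assumes k: "k > 0" and gx: "g x = ereal c" and rho: "\<rho> > 0"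
    and H: "\<And>a. c - \<rho> < a \<Longrightarrow> a < c \<Longrightarrow> edist x {y. g y \<le> ereal a} \<le> ereal (k * (c - a))"
  shows "ereal (1/k) \<le> strong_slope g x"
proof (rule ccontr)
  assume "\<not> ?thesis"
  then have lt: "strong_slope g x < ereal (1/k)" by simp
  obtain t0 where t0: "strong_slope g x < ereal t0" "ereal t0 < ereal (1/k)"
    using ereal_dense2[OF lt] by blast
  define t where "t = max t0 (1/(2*k))"
  have tpos: "t > 0" using k by (simp add: t_def less_max_iff_disj)
  have tk: "t < 1/k" using t0(2) k by (simp add: t_def field_simps)
  have "strong_slope g x < ereal t" using t0(1) by (simp add: t_def) (meson le_max_iff_disj less_le_trans order_refl ereal_less_eq(3))
  then have "eventually (\<lambda>y. max 0 (g x - g y) / ereal (dist x y) < ereal t) (at x)"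
    using Limsup_le_iff[THEN iffD1, OF order_refl] unfolding strong_slope_def by blast
  then obtain \<delta> where \<delta>: "\<delta> > 0" "\<And>y. y \<noteq> x \<Longrightarrow> dist y x < \<delta> \<Longrightarrow> max 0 (g x - g y) / ereal (dist x y) < ereal t"
    unfolding eventually_at by auto
  define m where "m = min (\<rho>/2) (t*\<delta>/2)"
  have mpos: "m > 0" using rho tpos \<delta> by (simp add: m_def)
  define a where "a = c - m"
  have "c - \<rho> < a" "a < c" using mpos rho by (auto simp: a_def m_def)
  from H[OF this] have "edist x {y. g y \<le> ereal a} \<le> ereal (k * m)" by (simp add: a_def)
  also have "k * m < m / t" using tk tpos mpos k by (simp add: field_simps)
  finally have "edist x {y. g y \<le> ereal a} < ereal (m / t)" by (simp add: le_less_trans)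
  then obtain y where y: "g y \<le> ereal a" "dist x y < m / t" using edist_lessE by blast
  have "m / t \<le> \<delta> / 2" using tpos by (simp add: m_def field_simps)
  then have dy: "dist y x < \<delta>" using y(2) \<delta>(1) dist_commute[of y x] by linarith
  have yx: "y \<noteq> x" using y(1) gx mpos by (auto simp: a_def)
  have dpos: "dist x y > 0" using yx by simp
  have "\<not> (max 0 (g x - g y) / ereal (dist x y) < ereal t)"
  proof (cases "g y")
    case (real s)
    then have sa: "s \<le> a" using y(1) by simp
    have "t < m / dist x y" using y(2) dpos tpos mpos by (simp add: field_simps)
    also have "\<dots> \<le> (c - s) / dist x y" using sa dpos by (intro divide_right_mono) (auto simp: a_def)
    finally have lt2: "t < (c - s) / dist x y" .
    have cs: "c - s > 0" using sa mpos by (simp add: a_def)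
    have "max 0 (g x - g y) = ereal (c - s)" using gx real cs by (simp add: max_def)
    then have "max 0 (g x - g y) / ereal (dist x y) = ereal ((c - s) / dist x y)"
      using dpos by (simp add: ereal_divide)
    then show ?thesis using lt2 by simp
  next
    case PInf then show ?thesis using y(1) by simp
  next
    case MInf
    then have "max 0 (g x - g y) = \<infinity>" using gx by simp
    then show ?thesis using dpos by simp
  qed
  with \<delta>(2)[OF yx dy] show False by blast
qed

lemma ereal_lt_trans1:
  assumes "a < c" "ereal c < L" shows "ereal a < L"
proof -
  have "ereal a < ereal c" using assms(1) by simp
  then show ?thesis using assms(2) by (rule less_trans)
qed

lemma ereal_le_lt_trans1:
  assumes "a \<le> c" "ereal c < L" shows "ereal a < L"
proof -
  have "ereal a \<le> ereal c" using assms(1) by simp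
  then show ?thesis using assms(2) by (rule le_less_trans)
qed

lemma hDist_ge: "x \<in> S2 \<Longrightarrow> edist x S1 \<le> hDist S1 S2"
  unfolding hDist_def by (rule max.coboundedI2) (rule SUP_upper)

lemma hDist_commute: "hDist S1 S2 = hDist S2 S1"
  unfolding hDist_def by (rule max.commute)

lemma edist_F_ge:
  fixes y t :: real
  assumes "ereal t \<le> T"
  shows "ereal (t - y) \<le> edist y {s. T \<le> ereal s}"
  unfolding edist_def
proof (rule INF_greatest)
  fix s assume "s \<in> {s. T \<le> ereal s}"
  then have "t \<le> s" proof -
    have "T \<le> ereal s" using \<open>s \<in> {s. T \<le> ereal s}\<close> by simp
    with assms have "ereal t \<le> ereal s" by (rule order.trans)
    then show ?thesis by simp
  qed
  then show "ereal (t - y) \<le> ereal (dist y s)" by (simp add: dist_real_def)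
qed

lemma core_A:
  fixes g :: "'a::metric_space \<Rightarrow> ereal"
  assumes k: "k > 0"
    and P2: "\<forall>a b. 0<a \<longrightarrow> ereal a < L \<longrightarrow> 0<b \<longrightarrow> ereal b < L \<longrightarrow>
               hDist {x. g x \<le> ereal a} {x. g x \<le> ereal b} \<le> ereal (k*\<bar>a-b\<bar>)"
  shows "\<forall>x. 0 < g x \<and> g x < L \<longrightarrow> ereal (1/k) \<le> strong_slope g x"
proof (intro allI impI)
  fix x assume x: "0 < g x \<and> g x < L"
  then obtain c where c: "g x = ereal c" by (cases "g x") auto
  have cpos: "c > 0" and cL: "ereal c < L" using x c by auto
  show "ereal (1/k) \<le> strong_slope g x"
  proof (rule slope_lb[where g=g and x=x and c=c and \<rho>=c, OF k c cpos])
    fix a assume a: "c - c < a" "a < c"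
    have "x \<in> {x. g x \<le> ereal c}" using c by simp
    then have "edist x {y. g y \<le> ereal a} \<le> hDist {x. g x \<le> ereal a} {x. g x \<le> ereal c}"
      by (rule hDist_ge)
    also have "\<dots> \<le> ereal (k*\<bar>a-c\<bar>)"
    proof -
      have "0 < a" using a by simp
      moreover have "ereal a < L" using a(2) cL by (rule ereal_lt_trans1)
      ultimately show ?thesis using P2 cpos cL by blast
    qed
    finally show "edist x {y. g y \<le> ereal a} \<le> ereal (k * (c - a))" using a by simp
  qed
qed

lemma core_B_aux:
  fixes g :: "'a::complete_space \<Rightarrow> ereal"
  assumes lsc: "lsc g" and nn: "\<And>x. 0 \<le> g x" and k: "k > 0"
    and P3: "\<forall>x. 0 < g x \<and> g x < L \<longrightarrow> ereal (1/k) \<le> strong_slope g x"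
    and ab: "0 < a" "a \<le> b" "ereal b < L"
  shows "hDist {x. g x \<le> ereal a} {x. g x \<le> ereal b} \<le> ereal (k*(b-a))"
proof -
  have kba: "0 \<le> k*(b-a)" using k ab by simp
  have 1: "(SUP x\<in>{x. g x \<le> ereal a}. edist x {x. g x \<le> ereal b}) \<le> ereal (k*(b-a))"
  proof (rule SUP_least)
    fix x assume "x \<in> {x. g x \<le> ereal a}"
    then have "x \<in> {x. g x \<le> ereal b}" using ab by (auto intro: order.trans)
    then show "edist x {x. g x \<le> ereal b} \<le> ereal (k*(b-a))" using kba by (simp add: edist_self)
  qed
  have 2: "(SUP x\<in>{x. g x \<le> ereal b}. edist x {x. g x \<le> ereal a}) \<le> ereal (k*(b-a))"
  proof (rule SUP_least)
    fix x assume x: "x \<in> {x. g x \<le> ereal b}"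
    show "edist x {x. g x \<le> ereal a} \<le> ereal (k*(b-a))"
    proof (cases "g x \<le> ereal a")
      case True then show ?thesis using kba by (simp add: edist_self)
    next
      case False
      then have gxa: "ereal a < g x" by simp
      obtain c where c: "g x = ereal c" using x gxa by (cases "g x") auto
      have cb: "c \<le> b" using x c by simp
      have gxL: "g x < L" using c ereal_le_lt_trans1[OF cb ab(3)] by simp
      have "edist x {x. g x \<le> ereal a} \<le> ereal (k * (c - a))"
      proof (rule error_bound[OF lsc nn k _ gxa c gxL])
        fix z assume "ereal a < g z" "g z < L"
        moreover have "0 < g z" proof -
          have "0 < ereal a" using ab(1) by simp
          then show ?thesis using \<open>ereal a < g z\<close> by (rule less_trans)
        qed
        ultimately show "ereal (1/k) \<le> strong_slope g z" using P3 by blast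
      qed
      also have "\<dots> \<le> ereal (k*(b-a))" using cb k by simp
      finally show ?thesis .
    qed
  qed
  show ?thesis unfolding hDist_def using 1 2 by simp
qed

lemma core_B:
  fixes g :: "'a::complete_space \<Rightarrow> ereal"
  assumes lsc: "lsc g" and nn: "\<And>x. 0 \<le> g x" and k: "k > 0"
    and P3: "\<forall>x. 0 < g x \<and> g x < L \<longrightarrow> ereal (1/k) \<le> strong_slope g x"
  shows "\<forall>a b. 0<a \<longrightarrow> ereal a < L \<longrightarrow> 0<b \<longrightarrow> ereal b < L \<longrightarrow>
               hDist {x. g x \<le> ereal a} {x. g x \<le> ereal b} \<le> ereal (k*\<bar>a-b\<bar>)"
proof (intro allI impI)
  fix a b :: real assume ab: "0 < a" "ereal a < L" "0 < b" "ereal b < L"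
  show "hDist {x. g x \<le> ereal a} {x. g x \<le> ereal b} \<le> ereal (k*\<bar>a-b\<bar>)"
  proof (cases "a \<le> b")
    case True
    then show ?thesis using core_B_aux[OF lsc nn k P3 ab(1) True ab(4)] by simp
  next
    case False
    then have ba: "b \<le> a" by simp
    have "hDist {x. g x \<le> ereal b} {x. g x \<le> ereal a} \<le> ereal (k*(a-b))"
      by (rule core_B_aux[OF lsc nn k P3 ab(3) ba ab(2)])
    moreover have "\<bar>a - b\<bar> = a - b" using ba by simp
    ultimately show ?thesis by (subst hDist_commute) simp
  qed
qed

lemma inv_map_F: "inv_map (\<lambda>x. {y::real. g x \<le> ereal y}) y = {x. g x \<le> ereal y}"
  by (simp add: inv_map_def)

lemma core_C:
  fixes g :: "'a::metric_space \<Rightarrow> ereal"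
  assumes k: "k > 0"
    and P1: "metric_regular_on k (\<lambda>x. {y::real. g x \<le> ereal y}) ({x. 0 < g x \<and> g x < L} \<times> {y. 0 < y \<and> ereal y < L})"
  shows "\<forall>x. 0 < g x \<and> g x < L \<longrightarrow> ereal (1/k) \<le> strong_slope g x"
proof (intro allI impI)
  fix x assume x: "0 < g x \<and> g x < L"
  then obtain c where c: "g x = ereal c" by (cases "g x") auto
  have cpos: "c > 0" and cL: "ereal c < L" using x c by auto
  have "(x, c) \<in> graph (\<lambda>x. {y::real. g x \<le> ereal y}) \<inter> ({x. 0 < g x \<and> g x < L} \<times> {y. 0 < y \<and> ereal y < L})"
    using x c cpos cL by (simp add: graph_def)
  then have "metric_regular_at k (\<lambda>x. {y::real. g x \<le> ereal y}) x c"
    using P1 unfolding metric_regular_on_def by blast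
  then obtain \<epsilon> \<delta> where \<epsilon>\<delta>: "\<epsilon> > 0" "\<delta> > 0" and
    reg: "\<And>x' y. x' \<in> ball x \<epsilon> \<Longrightarrow> y \<in> ball c \<delta> \<Longrightarrow>
       edist x' (inv_map (\<lambda>x. {y::real. g x \<le> ereal y}) y) \<le> ereal k * edist y {y'. g x' \<le> ereal y'}"
    unfolding metric_regular_at_def by blast
  show "ereal (1/k) \<le> strong_slope g x"
  proof (rule slope_lb[where g=g and x=x and c=c and \<rho>="min \<delta> c", OF k c])
    show "0 < min \<delta> c" using \<epsilon>\<delta> cpos by simp
    fix a assume a: "c - min \<delta> c < a" "a < c"
    have ab: "a \<in> ball c \<delta>" using a by (simp add: dist_real_def)
    have xb: "x \<in> ball x \<epsilon>" using \<epsilon>\<delta> by simp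
    have "edist x {y. g y \<le> ereal a} \<le> ereal k * edist a {y'. g x \<le> ereal y'}"
      using reg[OF xb ab] by (simp add: inv_map_F)
    also have "\<dots> \<le> ereal k * ereal (c - a)"
    proof (rule ereal_mult_left_mono)
      have "c \<in> {y'. g x \<le> ereal y'}" using c by simp
      then have "edist a {y'. g x \<le> ereal y'} \<le> ereal (dist a c)" by (rule edist_le_dist)
      then show "edist a {y'. g x \<le> ereal y'} \<le> ereal (c - a)" using a by (simp add: dist_real_def)
      show "0 \<le> ereal k" using k by simp
    qed
    finally show "edist x {y. g y \<le> ereal a} \<le> ereal (k * (c - a))" by simp
  qed
qed

lemma core_D_pt:
  fixes g :: "'a::metric_space \<Rightarrow> ereal"
  assumes k: "k > 0" and gL: "\<And>x. g x \<le> L"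
    and P2: "\<forall>a b. 0<a \<longrightarrow> ereal a < L \<longrightarrow> 0<b \<longrightarrow> ereal b < L \<longrightarrow>
               hDist {x. g x \<le> ereal a} {x. g x \<le> ereal b} \<le> ereal (k*\<bar>a-b\<bar>)"
    and xb: "g xb \<le> ereal yb" "0 < g xb" "g xb < L" "0 < yb" "ereal yb < L"
  shows "metric_regular_at k (\<lambda>x. {y::real. g x \<le> ereal y}) xb yb"
proof -
  obtain c where c: "g xb = ereal c" using xb by (cases "g xb") auto
  have cpos: "0 < c" and cyb: "c \<le> yb" using c xb by auto
  have main: "\<forall>x\<in>ball xb \<epsilon>. \<forall>y\<in>ball yb \<delta>. edist x (inv_map (\<lambda>x. {y::real. g x \<le> ereal y}) y)
                  \<le> ereal k * edist y {s. g x \<le> ereal s}"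
    if \<delta>1: "0 < \<delta>" "\<delta> \<le> yb/2" and \<epsilon>0: "0 < \<epsilon>"
      and fin: "\<And>l. L = ereal l \<Longrightarrow> \<delta> \<le> (l - yb)/2 \<and> \<epsilon> \<le> k*(l-c) \<and> \<epsilon> \<le> k*(l-yb)/2" for \<epsilon> \<delta>
  proof (intro ballI)
    fix x y assume x: "x \<in> ball xb \<epsilon>" and y: "y \<in> ball yb \<delta>"
    have dx: "dist x xb < \<epsilon>" using x by (simp add: dist_commute)
    have dy: "\<bar>y - yb\<bar> < \<delta>" using y by (simp add: dist_real_def abs_minus_commute)
    have ypos: "0 < y" using dy \<delta>1 by linarith
    have yL: "ereal y < L"
    proof (cases L)
      case (real l)
      then have "\<delta> \<le> (l - yb)/2" using fin by blast
      moreover have "yb < l" using xb(5) real by simp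
      ultimately show ?thesis using dy real by simp
    next
      case PInf then show ?thesis by simp
    next
      case MInf then show ?thesis using xb(5) by simp
    qed
    define S where "S = {z. g z \<le> ereal y}"
    have invS: "inv_map (\<lambda>x. {y::real. g x \<le> ereal y}) y = S" by (simp add: inv_map_F S_def)
    have rnn: "0 \<le> ereal k * edist y {s. g x \<le> ereal s}"
      using ereal_mult_left_mono[OF edist_nonneg[of y "{s. g x \<le> ereal s}"], of "ereal k"] k by simp
    have "edist x S \<le> ereal k * edist y {s. g x \<le> ereal s}"
    proof (cases "g x \<le> ereal y")
      case True
      then have "x \<in> S" by (simp add: S_def)
      then show ?thesis using rnn by (simp add: edist_self)
    next
      case False
      then have gxy: "ereal y < g x" by simp
      show ?thesis
      proof (cases "g x")
        case PInf
        then have "{s. g x \<le> ereal s} = {}" by simp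
        then have "edist y {s. g x \<le> ereal s} = \<infinity>" by (simp add: edist_def top_ereal_def)
        then show ?thesis using k by simp
      next
        case MInf then show ?thesis using gxy by simp
      next
        case (real b)
        have yb': "y < b" using gxy real by simp
        have "ereal (b - y) \<le> edist y {s. g x \<le> ereal s}" by (rule edist_F_ge) (simp add: real)
        then have "ereal k * ereal (b - y) \<le> ereal k * edist y {s. g x \<le> ereal s}"
          using k by (intro ereal_mult_left_mono) auto
        then have low: "ereal (k * (b - y)) \<le> ereal k * edist y {s. g x \<le> ereal s}" by simp
        have "edist x S \<le> ereal (k * (b - y))"
        proof (cases "ereal b < L")
          case True
          have "x \<in> {z. g z \<le> ereal b}" using real by simp
          then have "edist x S \<le> hDist S {z. g z \<le> ereal b}" by (rule hDist_ge)
          also have "\<dots> \<le> ereal (k * \<bar>y - b\<bar>)" using P2 ypos yL True yb' unfolding S_def by (meson less_trans)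
          finally show ?thesis using yb' by simp
        next
          case False
          then have Lb: "L = ereal b" using gL[of x] real by (simp add: not_less antisym)
          then have fb: "\<delta> \<le> (b - yb)/2" "\<epsilon> \<le> k*(b-c)" "\<epsilon> \<le> k*(b-yb)/2" using fin by blast+
          have "edist x S \<le> ereal (dist x xb) + edist xb S" by (rule edist_triangle)
          also have "\<dots> \<le> ereal (k * (b - y))"
          proof (cases "c \<le> y")
            case True
            then have "xb \<in> S" using c by (simp add: S_def)
            then have "edist xb S = 0" by (rule edist_self)
            moreover have "dist x xb \<le> k * (b - y)"
            proof -
              have "b - yb < 2 * (b - y)" using dy fb(1) by (simp add: abs_less_iff)
              then have "k*(b-yb) \<le> k * (2 * (b - y))" using k by (intro mult_left_mono) auto
              moreover have "k * (2 * (b - y)) = 2 * (k * (b - y))" by simp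
              ultimately have "k*(b-yb)/2 \<le> k * (b - y)" by linarith
              then show ?thesis using dx fb(3) by linarith
            qed
            ultimately show ?thesis by simp
          next
            case False
            have "xb \<in> {z. g z \<le> ereal c}" using c by simp
            then have "edist xb S \<le> hDist S {z. g z \<le> ereal c}" by (rule hDist_ge)
            also have "\<dots> \<le> ereal (k * \<bar>y - c\<bar>)"
              using P2 ypos yL cpos xb(3) c unfolding S_def by simp
            finally have e1: "edist xb S \<le> ereal (k * (c - y))" using False by simp
            have "ereal (dist x xb) + edist xb S \<le> ereal (dist x xb) + ereal (k * (c - y))"
              using e1 by (rule add_left_mono)
            also have "\<dots> \<le> ereal (k * (b - y))"
            proof -
              have "dist x xb + k * (c - y) \<le> k * (b - y)" using dx fb(2) by (simp add: algebra_simps)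
              then show ?thesis by simp
            qed
            finally show ?thesis .
          qed
          finally show ?thesis .
        qed
        then show ?thesis using low by (rule order.trans)
      qed
    qed
    then show "edist x (inv_map (\<lambda>x. {y::real. g x \<le> ereal y}) y) \<le> ereal k * edist y {s. g x \<le> ereal s}"
      using invS by simp
  qed
  have graph: "(xb, yb) \<in> graph (\<lambda>x. {y::real. g x \<le> ereal y})" using xb by (simp add: graph_def)
  show ?thesis
  proof (cases L)
    case (real l)
    have lyb: "yb < l" "c < l" using xb c real by auto
    have "\<forall>x\<in>ball xb (k * min (l - c) ((l-yb)/2)). \<forall>y\<in>ball yb (min (yb/2) ((l-yb)/2)).
            edist x (inv_map (\<lambda>x. {y::real. g x \<le> ereal y}) y) \<le> ereal k * edist y {s. g x \<le> ereal s}"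
      by (rule main) (use lyb k xb real in \<open>auto simp: min_def\<close>)
    moreover have "0 < k * min (l - c) ((l-yb)/2)" "0 < min (yb/2) ((l-yb)/2)" using lyb k xb by auto
    ultimately show ?thesis unfolding metric_regular_at_def using graph by blast
  next
    case PInf
    have "\<forall>x\<in>ball xb 1. \<forall>y\<in>ball yb (yb/2).
            edist x (inv_map (\<lambda>x. {y::real. g x \<le> ereal y}) y) \<le> ereal k * edist y {s. g x \<le> ereal s}"
      by (rule main) (use xb PInf in auto)
    moreover have "0 < yb / 2" using xb by simp
    ultimately show ?thesis unfolding metric_regular_at_def using graph by (metis zero_less_one)
  next
    case MInf then show ?thesis using xb by simp
  qed
qed

lemma core_D:
  fixes g :: "'a::metric_space \<Rightarrow> ereal"
  assumes k: "k > 0" and gL: "\<And>x. g x \<le> L"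
    and P2: "\<forall>a b. 0<a \<longrightarrow> ereal a < L \<longrightarrow> 0<b \<longrightarrow> ereal b < L \<longrightarrow>
               hDist {x. g x \<le> ereal a} {x. g x \<le> ereal b} \<le> ereal (k*\<bar>a-b\<bar>)"
  shows "metric_regular_on k (\<lambda>x. {y::real. g x \<le> ereal y}) ({x. 0 < g x \<and> g x < L} \<times> {y. 0 < y \<and> ereal y < L})"
  unfolding metric_regular_on_def
proof (intro ballI)
  fix p assume "p \<in> graph (\<lambda>x. {y::real. g x \<le> ereal y}) \<inter> ({x. 0 < g x \<and> g x < L} \<times> {y. 0 < y \<and> ereal y < L})"
  then obtain xb yb where p: "p = (xb, yb)" "g xb \<le> ereal yb" "0 < g xb" "g xb < L" "0 < yb" "ereal yb < L"
    by (cases p) (auto simp: graph_def)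
  show "case p of (xb, yb) \<Rightarrow> metric_regular_at k (\<lambda>x. {y. g x \<le> ereal y}) xb yb"
    using core_D_pt[OF k gL P2 p(2-6)] p(1) by simp
qed

lemma classK_strict:
  assumes K: "classK r0 \<phi>" and st: "0 \<le> s" "s < t" "t < r0"
  shows "\<phi> s < \<phi> t"
proof -
  from K obtain \<phi>' where d: "\<forall>r\<in>{0<..<r0}. (\<phi> has_real_derivative \<phi>' r) (at r) \<and> \<phi>' r > 0"
    and c: "continuous_on {0..<r0} \<phi>" unfolding classK_def by blast
  show ?thesis
  proof (rule DERIV_pos_imp_increasing_open[OF st(2)])
    fix x assume "s < x" "x < t"
    then have "x \<in> {0<..<r0}" using st by auto
    then show "\<exists>y. DERIV \<phi> x :> y \<and> y > 0" using d by blast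
  next
    show "continuous_on {s..t} \<phi>" using c by (rule continuous_on_subset) (use st in auto)
  qed
qed

lemma classK_pos:
  assumes K: "classK r0 \<phi>" and "0 < t" "t < r0"
  shows "0 < \<phi> t"
  using classK_strict[OF K, of 0 t] assms K by (simp add: classK_def)

lemma classK_lim:
  assumes K: "classK r0 \<phi>" and r0: "r0 > 0"
  shows "phi_lim r0 \<phi> = (SUP t\<in>{0<..<r0}. ereal (\<phi> t))"
proof -
  define M where "M = (SUP t\<in>{0<..<r0}. ereal (\<phi> t))"
  have "((\<lambda>r. ereal (\<phi> r)) \<longlongrightarrow> M) (at_left r0)"
  proof (rule order_tendstoI)
    fix a assume "a < M"
    then obtain t where t: "t \<in> {0<..<r0}" "a < ereal (\<phi> t)" unfolding M_def by (auto simp: less_SUP_iff)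
    have "t < r0" using t by simp
    show "eventually (\<lambda>r. a < ereal (\<phi> r)) (at_left r0)"
      using eventually_at_left_real[OF \<open>t < r0\<close>]
    proof (rule eventually_mono)
      fix r assume "r \<in> {t<..<r0}"
      then have "\<phi> t < \<phi> r" using classK_strict[OF K] t by auto
      then have "ereal (\<phi> t) < ereal (\<phi> r)" by simp
      with t(2) show "a < ereal (\<phi> r)" by (rule less_trans)
    qed
  next
    fix a assume "M < a"
    show "eventually (\<lambda>r. ereal (\<phi> r) < a) (at_left r0)"
      using eventually_at_left_real[OF r0]
    proof (rule eventually_mono)
      fix r assume "r \<in> {0<..<r0}"
      then have "ereal (\<phi> r) \<le> M" unfolding M_def by (rule SUP_upper)
      then show "ereal (\<phi> r) < a" using \<open>M < a\<close> by (rule le_less_trans)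
    qed
  qed
  then show ?thesis unfolding phi_lim_def M_def by (intro tendsto_Lim) auto
qed

lemma classK_below_lim:
  assumes K: "classK r0 \<phi>" and r0: "r0 > 0" and t: "0 \<le> t" "t < r0"
  shows "ereal (\<phi> t) < phi_lim r0 \<phi>"
proof -
  define s where "s = (t + r0) / 2"
  have s: "s \<in> {0<..<r0}" "t < s" using t by (auto simp: s_def)
  have "\<phi> t < \<phi> s" using classK_strict[OF K t(1) s(2)] s by auto
  then have 1: "ereal (\<phi> t) < ereal (\<phi> s)" by simp
  have "ereal (\<phi> s) \<le> phi_lim r0 \<phi>"
    unfolding classK_lim[OF K r0] using s(1) by (rule SUP_upper)
  with 1 show ?thesis by (rule less_le_trans)
qed

lemma classK_lim_pos:
  assumes K: "classK r0 \<phi>" and r0: "r0 > 0"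
  shows "0 < phi_lim r0 \<phi>"
  using classK_below_lim[OF K r0, of 0] K r0 by (simp add: classK_def zero_ereal_def)

lemma classK_ivt:
  assumes K: "classK r0 \<phi>" and r0: "r0 > 0" and y: "0 < y" "ereal y < phi_lim r0 \<phi>"
  shows "\<exists>r. 0 < r \<and> r < r0 \<and> \<phi> r = y"
proof -
  obtain t where t: "t \<in> {0<..<r0}" "ereal y < ereal (\<phi> t)"
    using y(2) unfolding classK_lim[OF K r0] by (auto simp: less_SUP_iff)
  have c: "continuous_on {0..t} \<phi>" using K t(1) unfolding classK_def
    by (auto elim: continuous_on_subset)
  have "\<phi> 0 \<le> y" using K y by (simp add: classK_def)
  from IVT'[of \<phi> 0 y t, OF this _ _ c] t
  obtain r where r: "0 \<le> r" "r \<le> t" "\<phi> r = y" by auto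
  have "r \<noteq> 0" using r K y by (auto simp: classK_def)
  then show ?thesis using r t by (intro exI[of _ r]) auto
qed

lemma phi_comp_cases:
  assumes K: "classK r0 \<phi>" and r0: "r0 > 0" and fx: "f x \<noteq> -\<infinity>"
  obtains (neg) "f x \<le> 0" "phi_comp r0 \<phi> f x = 0"
    | (mid) t where "f x = ereal t" "0 < t" "t < r0" "phi_comp r0 \<phi> f x = ereal (\<phi> t)"
    | (big) "ereal r0 \<le> f x" "phi_comp r0 \<phi> f x = phi_lim r0 \<phi>"
proof (cases "f x \<le> 0")
  case True then show ?thesis using neg K by (simp add: phi_comp_def classK_def zero_ereal_def)
next
  case False
  show ?thesis
  proof (cases "f x < ereal r0")
    case True
    then obtain t where t: "f x = ereal t" using fx by (cases "f x") auto
    then show ?thesis using mid[of t] False True by (simp add: phi_comp_def)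
  next
    case False2: False
    have "ereal r0 \<le> f x" using False2 by simp
    then show ?thesis using big False False2 by (simp add: phi_comp_def)
  qed
qed

lemma phi_comp_props:
  assumes K: "classK r0 \<phi>" and r0: "r0 > 0" and fx: "f x \<noteq> -\<infinity>"
  shows "0 \<le> phi_comp r0 \<phi> f x" "phi_comp r0 \<phi> f x \<le> phi_lim r0 \<phi>"
    "0 < phi_comp r0 \<phi> f x \<longleftrightarrow> 0 < f x"
    "phi_comp r0 \<phi> f x < phi_lim r0 \<phi> \<longleftrightarrow> f x < ereal r0"
    "0 < r \<Longrightarrow> r < r0 \<Longrightarrow> phi_comp r0 \<phi> f x \<le> ereal (\<phi> r) \<longleftrightarrow> f x \<le> ereal r"
proof -
  have Lpos: "0 < phi_lim r0 \<phi>" by (rule classK_lim_pos[OF K r0])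
  have below: "ereal (\<phi> t) < phi_lim r0 \<phi>" if "0 \<le> t" "t < r0" for t
    using classK_below_lim[OF K r0 that] .
  have pos: "0 < \<phi> t" if "0 < t" "t < r0" for t using classK_pos[OF K that] .
  have all: "0 \<le> phi_comp r0 \<phi> f x \<and> phi_comp r0 \<phi> f x \<le> phi_lim r0 \<phi> \<and>
    (0 < phi_comp r0 \<phi> f x \<longleftrightarrow> 0 < f x) \<and>
    (phi_comp r0 \<phi> f x < phi_lim r0 \<phi> \<longleftrightarrow> f x < ereal r0)"
  proof (rule phi_comp_cases[of r0 \<phi> f x, OF K r0 fx])
    assume neg: "f x \<le> 0" "phi_comp r0 \<phi> f x = 0"
    have "0 < ereal r0" using r0 by simp
    with neg(1) have "f x < ereal r0" by (rule le_less_trans)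
    then show ?thesis using Lpos r0 neg by (auto simp: less_imp_le)
  next
    fix t assume mid: "f x = ereal t" "0 < t" "t < r0" "phi_comp r0 \<phi> f x = ereal (\<phi> t)"
    then show ?thesis using below[of t] pos[of t] by (auto simp: less_imp_le)
  next
    assume big: "ereal r0 \<le> f x" "phi_comp r0 \<phi> f x = phi_lim r0 \<phi>"
    have "0 < ereal r0" using r0 by simp
    then have "0 < f x" using big(1) by (rule less_le_trans)
    then show ?thesis using Lpos r0 big by (auto simp: less_imp_le)
  qed
  then show "0 \<le> phi_comp r0 \<phi> f x" "phi_comp r0 \<phi> f x \<le> phi_lim r0 \<phi>"
    "0 < phi_comp r0 \<phi> f x \<longleftrightarrow> 0 < f x"
    "phi_comp r0 \<phi> f x < phi_lim r0 \<phi> \<longleftrightarrow> f x < ereal r0" by auto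
  assume r: "0 < r" "r < r0"
  show "phi_comp r0 \<phi> f x \<le> ereal (\<phi> r) \<longleftrightarrow> f x \<le> ereal r"
  proof (rule phi_comp_cases[of r0 \<phi> f x, OF K r0 fx])
    assume neg: "f x \<le> 0" "phi_comp r0 \<phi> f x = 0"
    have "0 \<le> ereal r" using r by simp
    with neg(1) have "f x \<le> ereal r" by (rule order.trans)
    then show ?thesis using neg pos[OF r] by simp
  next
    fix t assume mid: "f x = ereal t" "0 < t" "t < r0" "phi_comp r0 \<phi> f x = ereal (\<phi> t)"
    have "\<phi> t \<le> \<phi> r \<longleftrightarrow> t \<le> r"
    proof (cases "t \<le> r")
      case True
      then show ?thesis using classK_strict[OF K, of t r] mid r by (cases "t = r") auto
    next
      case False
      then show ?thesis using classK_strict[OF K, of r t] mid r by auto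
    qed
    then show ?thesis using mid by simp
  next
    assume big: "ereal r0 \<le> f x" "phi_comp r0 \<phi> f x = phi_lim r0 \<phi>"
    have "ereal r < ereal r0" using r by simp
    then have "ereal r < f x" using big(1) by (rule less_le_trans)
    then have "\<not> f x \<le> ereal r" by simp
    moreover have "\<not> phi_comp r0 \<phi> f x \<le> ereal (\<phi> r)" using big(2) below[of r] r by simp
    ultimately show ?thesis by simp
  qed
qed

lemma lsc_phi_comp:
  assumes K: "classK r0 \<phi>" and r0: "r0 > 0" and fx: "\<forall>x. f x \<noteq> -\<infinity>" and lscf: "lsc f"
  shows "lsc (phi_comp r0 \<phi> f)"
  unfolding lsc_def
proof (intro allI impI)
  fix x c assume c: "c < phi_comp r0 \<phi> f x"
  show "eventually (\<lambda>y. c < phi_comp r0 \<phi> f y) (nhds x)"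
  proof (cases "c < 0")
    case True
    show ?thesis
    proof (rule always_eventually, rule allI)
      fix y
      have "0 \<le> phi_comp r0 \<phi> f y" by (rule phi_comp_props(1)[where f=f and x=y, OF K r0 fx[rule_format]])
      with True show "c < phi_comp r0 \<phi> f y" by (rule less_le_trans)
    qed
  next
    case False
    have ex: "\<exists>s. 0 < s \<and> s < r0 \<and> ereal s < f x \<and> c < ereal (\<phi> s)"
    proof (rule phi_comp_cases[of r0 \<phi> f x, OF K r0 fx[rule_format]])
      assume "f x \<le> 0" "phi_comp r0 \<phi> f x = 0"
      then show ?thesis using c False by simp
    next
      fix t assume mid: "f x = ereal t" "0 < t" "t < r0" "phi_comp r0 \<phi> f x = ereal (\<phi> t)"
      obtain c' where c': "c = ereal c'" using c False mid(4) by (cases c) auto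
      have ct: "c' < \<phi> t" using c c' mid(4) by simp
      have cont: "continuous_on {0..<r0} \<phi>" using K by (simp add: classK_def)
      have tin: "t \<in> {0..<r0}" using mid by simp
      have ep: "0 < \<phi> t - c'" using ct by simp
      obtain d where d: "d > 0" "\<And>x'. x' \<in> {0..<r0} \<Longrightarrow> dist x' t < d \<Longrightarrow> dist (\<phi> x') (\<phi> t) < \<phi> t - c'"
        using continuous_on_iff[THEN iffD1, OF cont, rule_format, OF tin ep] by blast
      define s where "s = max (t/2) (t - d/2)"
      have s: "0 < s" "s < t" using mid d by (auto simp: s_def)
      have "dist s t < d" using s d by (auto simp: s_def dist_real_def)
      then have "dist (\<phi> s) (\<phi> t) < \<phi> t - c'" using d(2)[of s] s mid by auto
      then have "c' < \<phi> s" by (simp add: dist_real_def)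
      then show ?thesis using s mid c' by (intro exI[of _ s]) auto
    next
      assume big: "ereal r0 \<le> f x" "phi_comp r0 \<phi> f x = phi_lim r0 \<phi>"
      then have "c < (SUP t\<in>{0<..<r0}. ereal (\<phi> t))" using c classK_lim[OF K r0] by simp
      then obtain s where s: "s \<in> {0<..<r0}" "c < ereal (\<phi> s)" by (auto simp: less_SUP_iff)
      have "ereal s < ereal r0" using s by simp
      then have "ereal s < f x" using big(1) by (rule less_le_trans)
      then show ?thesis using s by (intro exI[of _ s]) auto
    qed
    then obtain s where s: "0 < s" "s < r0" "ereal s < f x" "c < ereal (\<phi> s)" by blast
    have "eventually (\<lambda>y. ereal s < f y) (nhds x)" using lscf s(3) by (simp add: lsc_def)
    then show ?thesis
    proof (rule eventually_mono)
      fix y assume "ereal s < f y"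
      then have "\<not> phi_comp r0 \<phi> f y \<le> ereal (\<phi> s)"
        using phi_comp_props(5)[where f=f and x=y, OF K r0 fx[rule_format] s(1,2)] by simp
      then have "ereal (\<phi> s) < phi_comp r0 \<phi> f y" by simp
      with s(4) show "c < phi_comp r0 \<phi> f y" by (rule less_trans)
    qed
  qed
qed

theorem corollary2p4:
  fixes f :: "'a::complete_space \<Rightarrow> ereal" and \<phi> :: "real \<Rightarrow> real" and r0 k :: real
  assumes "\<forall>x. f x \<noteq> -\<infinity>"
    and "lsc f"
    and "r0 > 0" and "k > 0"
    and "classK r0 \<phi>"
  shows "(metric_regular_on k (\<lambda>x. {y::real. phi_comp r0 \<phi> f x \<le> ereal y})
             ({x. 0 < f x \<and> f x < ereal r0} \<times> {y. 0 < y \<and> ereal y < phi_lim r0 \<phi>})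
          \<longleftrightarrow> (\<forall>r1\<in>{0<..<r0}. \<forall>r2\<in>{0<..<r0}.
                 hDist {x. f x \<le> ereal r1} {x. f x \<le> ereal r2} \<le> ereal (k * \<bar>\<phi> r1 - \<phi> r2\<bar>)))
       \<and> ((\<forall>r1\<in>{0<..<r0}. \<forall>r2\<in>{0<..<r0}.
                 hDist {x. f x \<le> ereal r1} {x. f x \<le> ereal r2} \<le> ereal (k * \<bar>\<phi> r1 - \<phi> r2\<bar>))
          \<longleftrightarrow> (\<forall>x. 0 < f x \<and> f x < ereal r0 \<longrightarrow> strong_slope (phi_comp r0 \<phi> f) x \<ge> ereal (1 / k)))"
proof -
  note fx = assms(1) and lscf = assms(2) and r0 = assms(3) and k = assms(4) and K = assms(5)
  define g where "g = phi_comp r0 \<phi> f"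
  define L where "L = phi_lim r0 \<phi>"
  have gnn: "\<And>x. 0 \<le> g x" unfolding g_def by (rule phi_comp_props(1)[where f=f, OF K r0 fx[rule_format]])
  have gL: "\<And>x. g x \<le> L" unfolding g_def L_def by (rule phi_comp_props(2)[where f=f, OF K r0 fx[rule_format]])
  have g0: "\<And>x. 0 < g x \<longleftrightarrow> 0 < f x" unfolding g_def by (rule phi_comp_props(3)[where f=f, OF K r0 fx[rule_format]])
  have gLt: "\<And>x. g x < L \<longleftrightarrow> f x < ereal r0" unfolding g_def L_def by (rule phi_comp_props(4)[where f=f, OF K r0 fx[rule_format]])
  have gsub: "\<And>r. 0 < r \<Longrightarrow> r < r0 \<Longrightarrow> {x. f x \<le> ereal r} = {x. g x \<le> ereal (\<phi> r)}"
    unfolding g_def using phi_comp_props(5)[where f=f, OF K r0 fx[rule_format]] by auto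
  have lscg: "lsc g" unfolding g_def by (rule lsc_phi_comp[OF K r0 fx lscf])
  have V: "{x. 0 < f x \<and> f x < ereal r0} = {x. 0 < g x \<and> g x < L}" using g0 gLt by blast
  define P1 where "P1 = metric_regular_on k (\<lambda>x. {y::real. g x \<le> ereal y}) ({x. 0 < g x \<and> g x < L} \<times> {y. 0 < y \<and> ereal y < L})"
  define P2 where "P2 = (\<forall>a b. 0<a \<longrightarrow> ereal a < L \<longrightarrow> 0<b \<longrightarrow> ereal b < L \<longrightarrow>
               hDist {x. g x \<le> ereal a} {x. g x \<le> ereal b} \<le> ereal (k*\<bar>a-b\<bar>))"
  define P3 where "P3 = (\<forall>x. 0 < g x \<and> g x < L \<longrightarrow> ereal (1/k) \<le> strong_slope g x)"
  define Q2 where "Q2 = (\<forall>r1\<in>{0<..<r0}. \<forall>r2\<in>{0<..<r0}.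
                 hDist {x. f x \<le> ereal r1} {x. f x \<le> ereal r2} \<le> ereal (k * \<bar>\<phi> r1 - \<phi> r2\<bar>))"
  have i_eq: "metric_regular_on k (\<lambda>x. {y::real. phi_comp r0 \<phi> f x \<le> ereal y})
             ({x. 0 < f x \<and> f x < ereal r0} \<times> {y. 0 < y \<and> ereal y < phi_lim r0 \<phi>}) = P1"
    unfolding P1_def V by (simp add: g_def L_def)
  have iii_eq: "(\<forall>x. 0 < f x \<and> f x < ereal r0 \<longrightarrow> strong_slope (phi_comp r0 \<phi> f) x \<ge> ereal (1 / k)) = P3"
    unfolding P3_def using g0 gLt by (simp add: g_def)
  have ii_eq: "Q2 = P2"
  proof
    assume Q: Q2
    show P2 unfolding P2_def
    proof (intro allI impI)
      fix a b :: real assume ab: "0 < a" "ereal a < L" "0 < b" "ereal b < L"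
      obtain r1 where r1: "0 < r1" "r1 < r0" "\<phi> r1 = a" using classK_ivt[OF K r0 ab(1)] ab(2) by (auto simp: L_def)
      obtain r2 where r2: "0 < r2" "r2 < r0" "\<phi> r2 = b" using classK_ivt[OF K r0 ab(3)] ab(4) by (auto simp: L_def)
      have "hDist {x. f x \<le> ereal r1} {x. f x \<le> ereal r2} \<le> ereal (k * \<bar>\<phi> r1 - \<phi> r2\<bar>)"
        using Q r1 r2 unfolding Q2_def by auto
      then show "hDist {x. g x \<le> ereal a} {x. g x \<le> ereal b} \<le> ereal (k*\<bar>a-b\<bar>)"
        using gsub[OF r1(1,2)] gsub[OF r2(1,2)] r1(3) r2(3) by simp
    qed
  next
    assume P: P2
    show Q2 unfolding Q2_def
    proof (intro ballI)
      fix r1 r2 assume r1: "r1 \<in> {0<..<r0}" and r2: "r2 \<in> {0<..<r0}"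
      have a: "0 < \<phi> r1" "ereal (\<phi> r1) < L" using classK_pos[OF K] classK_below_lim[OF K r0] r1 by (auto simp: L_def)
      have b: "0 < \<phi> r2" "ereal (\<phi> r2) < L" using classK_pos[OF K] classK_below_lim[OF K r0] r2 by (auto simp: L_def)
      have "hDist {x. g x \<le> ereal (\<phi> r1)} {x. g x \<le> ereal (\<phi> r2)} \<le> ereal (k*\<bar>\<phi> r1 - \<phi> r2\<bar>)"
        using P a b unfolding P2_def by blast
      then show "hDist {x. f x \<le> ereal r1} {x. f x \<le> ereal r2} \<le> ereal (k * \<bar>\<phi> r1 - \<phi> r2\<bar>)"
        using gsub r1 r2 by simp
    qed
  qed
  have C: "P1 \<Longrightarrow> P3" unfolding P1_def P3_def by (rule core_C[OF k])
  have B: "P3 \<Longrightarrow> P2" unfolding P2_def P3_def by (rule core_B[OF lscg gnn k])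
  have A: "P2 \<Longrightarrow> P3" unfolding P2_def P3_def by (rule core_A[OF k])
  have D: "P2 \<Longrightarrow> P1" unfolding P2_def P1_def by (rule core_D[OF k gL])
  have "(P1 \<longleftrightarrow> Q2) \<and> (Q2 \<longleftrightarrow> P3)" using A B C D ii_eq by blast
  then show ?thesis unfolding i_eq iii_eq Q2_def .
qed

end
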